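(* Let $g\in\breve{\mathcal C}$, $0<\alpha\le\sigma(g)$, $\beta:=\inf g^{-1}(\{0\})$ and $\gamma:=\int g$. Then: (a) $\alpha\le2\gamma\le\beta\le1$, and $\alpha=2\gamma\implies 2\gamma=\beta\implies\int Tg=\frac13$; (b) the derivative $(Tg)'\colon[0,1]\to(-\infty,0]$ exists and is continuous, strictly increasing and concave; (c) $Tg\in\breve{\mathcal D}^\sharp$ with $\sigma(Tg)=\frac\gamma\beta$; (d) $\frac\beta\gamma(x-1)\le(Tg)'(x)\le\frac\alpha\gamma(x-1)$ for all $x\in[0,1]$; (e) $\int Tg\le\frac13$; (f) $\alpha\beta-4\alpha\gamma+4\gamma^2\le6(\beta-\alpha)\gamma\int Tg$.
   Context: "Decreasing" means non-increasing; $\int f:=\int_0^1 f(x)\,dx$. $\mathcal E$: measurable decreasing $f\colon[0,1]\to[0,\infty)$ with $f(0)=1$ and $\int f>0$. $\mathcal C$: continuous $f\in\mathcal E$ with $f(1)=0$; $\breve{\mathcal C}$: convex $f\in\mathcal C$. $\mathcal D$: strictly decreasing $f\in\mathcal C$. $\mathcal D'$: $f\in\mathcal D$ continuously differentiable on $(0,1]$. $\mathcal D^\sharp$: $f\in\mathcal D'$ with $f'(1)=0$ and $\lim_{x\to0}f'(x)$ existing in $(-\infty,0]$; $\breve{\mathcal D}^\sharp:=\mathcal D^\sharp\cap\breve{\mathcal C}$. For $g\in\breve{\mathcal C}$, the stride is $\sigma(g):=\sup\{\alpha\ge0:\ \alpha-x\le\alpha g(x)\ \forall x\in[0,1]\}$.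 For $g\in\mathcal E$, $g^*(y):=\sup\{x\in[0,1]:g(x)\ge y\}$. $T$ on $\mathcal E$: $(Tf)(x)=\frac{\int_x^1f^*}{\int f}$. *)

theory Defs
  imports "HOL-Analysis.Analysis"
begin

text \<open>Functions are considered on [0,1]; values outside are irrelevant.
 Integrals are over [0,1]. "Decreasing" means non-increasing.\<close>

definition decreasing01 :: "(real \<Rightarrow> real) \<Rightarrow> bool" where
  "decreasing01 f \<longleftrightarrow> (\<forall>x\<in>{0..1}. \<forall>y\<in>{0..1}. x \<le> y \<longrightarrow> f y \<le> f x)"

definition classE :: "(real \<Rightarrow> real) \<Rightarrow> bool" where
  "classE f \<longleftrightarrow> f \<in> borel_measurable (lebesgue_on {0..1}) \<and> decreasing01 f
     \<and> (\<forall>x\<in>{0..1}. 0 \<le> f x) \<and> f 0 = 1 \<and> integral {0..1} f > 0"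

definition classC :: "(real \<Rightarrow> real) \<Rightarrow> bool" where
  "classC f \<longleftrightarrow> classE f \<and> continuous_on {0..1} f \<and> f 1 = 0"

definition classCconv :: "(real \<Rightarrow> real) \<Rightarrow> bool" where
  "classCconv f \<longleftrightarrow> classC f \<and> convex_on {0..1} f"

definition classD :: "(real \<Rightarrow> real) \<Rightarrow> bool" where
  "classD f \<longleftrightarrow> classC f \<and> (\<forall>x\<in>{0..1}. \<forall>y\<in>{0..1}. x < y \<longrightarrow> f y < f x)"

definition classD' :: "(real \<Rightarrow> real) \<Rightarrow> bool" where
  "classD' f \<longleftrightarrow> classD f \<and> (\<exists>f'. (\<forall>x\<in>{0<..1}. (f has_real_derivative f' x) (at x within {0..1}))
      \<and> continuous_on {0<..1} f')"

definition classDsharp :: "(real \<Rightarrow> real) \<Rightarrow> bool" where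
  "classDsharp f \<longleftrightarrow> classD f \<and> (\<exists>f'. (\<forall>x\<in>{0<..1}. (f has_real_derivative f' x) (at x within {0..1}))
      \<and> continuous_on {0<..1} f' \<and> f' 1 = 0 \<and> (\<exists>L\<le>0. (f' \<longlongrightarrow> L) (at_right 0)))"

definition classDsharpconv :: "(real \<Rightarrow> real) \<Rightarrow> bool" where
  "classDsharpconv f \<longleftrightarrow> classDsharp f \<and> classCconv f"

definition stride :: "(real \<Rightarrow> real) \<Rightarrow> real" where
  "stride g = Sup {a. 0 \<le> a \<and> (\<forall>x\<in>{0..1}. a - x \<le> a * g x)}"

definition gstar :: "(real \<Rightarrow> real) \<Rightarrow> real \<Rightarrow> real" where
  "gstar g y = Sup {x\<in>{0..1}. y \<le> g x}"

definition T :: "(real \<Rightarrow> real) \<Rightarrow> real \<Rightarrow> real" where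
  "T f x = integral {x..1} (gstar f) / integral {0..1} f"

end

theory Submission
  imports Defs
begin


lemma area_swap:
  fixes G P :: "real \<Rightarrow> real"
  assumes cG: "continuous_on UNIV G"
    and G01: "\<And>x. x \<in> {0..1} \<Longrightarrow> 0 \<le> G x \<and> G x \<le> 1"
    and PG: "\<And>x y. x \<in> {0..1} \<Longrightarrow> y \<in> {0<..1} \<Longrightarrow> (y \<le> G x \<longleftrightarrow> x \<le> P y)"
    and P01: "\<And>y. y \<in> {0<..1} \<Longrightarrow> 0 \<le> P y \<and> P y \<le> 1"
    and IG: "(G has_integral I) {0..1}" and IP: "(P has_integral J) {0<..1}"
  shows "I = J"
proof -
  define A where "A = {p. fst p\<in>{0..1::real} \<and> 0 < snd p \<and> snd p \<le> G (fst p)}"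
  have [measurable]: "G \<in> borel_measurable borel"
    using cG by (simp add: borel_measurable_continuous_onI)
  have "Measurable.pred (lborel \<Otimes>\<^sub>M lborel) (\<lambda>p. fst p\<in>{0..1::real} \<and> 0 < snd p \<and> snd p \<le> G (fst p))"
    by measurable
  then have "{p \<in> space (lborel \<Otimes>\<^sub>M lborel). fst p\<in>{0..1::real} \<and> 0 < snd p \<and> snd p \<le> G (fst p)} \<in> sets (lborel \<Otimes>\<^sub>M lborel)"
    by (simp add: pred_def)
  then have meas: "(\<lambda>p. indicator A p :: ennreal) \<in> borel_measurable (lborel \<Otimes>\<^sub>M lborel)"
    by (simp add: space_pair_measure A_def)
  have F: "(\<integral>\<^sup>+ y. (\<integral>\<^sup>+ x. indicator A (x,y) \<partial>lborel) \<partial>lborel) = (\<integral>\<^sup>+ x. (\<integral>\<^sup>+ y. indicator A (x, y) \<partial>lborel) \<partial>lborel)"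
    using lborel_pair.Fubini'[of "\<lambda>x y. indicator A (x,y)"] meas by simp
  have in1: "(\<integral>\<^sup>+ y. indicator A (x, y) \<partial>lborel) = ennreal (G x) * indicator {0..1} x" for x
  proof (cases "x \<in> {0..1}")
    case True
    then have "(\<lambda>y. indicator A (x,y) :: ennreal) = indicator {0<..G x}"
      by (auto simp: A_def indicator_def fun_eq_iff)
    then show ?thesis using True G01[OF True] by simp
  next
    case False
    then have "(\<lambda>y. indicator A (x,y) :: ennreal) = (\<lambda>y. 0)"
      by (auto simp: A_def indicator_def fun_eq_iff)
    then show ?thesis using False by simp
  qed
  have in2: "(\<integral>\<^sup>+ x. indicator A (x, y) \<partial>lborel) = ennreal (P y) * indicator {0<..1} y" for y
  proof (cases "y \<in> {0<..1}")
    case True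
    have "(\<lambda>x. indicator A (x,y) :: ennreal) = indicator {0..P y}"
      using True P01[OF True] PG[of _ y] G01
      by (auto simp: A_def indicator_def fun_eq_iff)
    then show ?thesis using True P01[OF True] by simp
  next
    case False
    have "(\<lambda>x. indicator A (x,y) :: ennreal) = (\<lambda>x. 0)"
      using False G01 by (force simp: A_def indicator_def fun_eq_iff)
    then show ?thesis using False by simp
  qed
  have "(\<integral>\<^sup>+ x. ennreal (G x) * indicator {0..1} x \<partial>lborel) = ennreal I"
    by (rule nn_integral_has_integral_lebesgue'[OF _ IG]) (use G01 in auto)
  moreover have "(\<integral>\<^sup>+ y. ennreal (P y) * indicator {0<..1} y \<partial>lborel) = ennreal J"
    by (rule nn_integral_has_integral_lebesgue'[OF _ IP]) (use P01 in auto)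
  ultimately have "ennreal I = ennreal J" using F in1 in2 by simp
  moreover have "I \<ge> 0" using has_integral_nonneg[OF IG] G01 by auto
  moreover have "J \<ge> 0" using has_integral_nonneg[OF IP] P01 by auto
  ultimately show ?thesis by simp
qed


locale gsetup =
  fixes g :: "real \<Rightarrow> real" and \<alpha> :: real
  assumes conv: "convex_on {0..1} g" and cont: "continuous_on {0..1} g"
    and g0: "g 0 = 1" and g1: "g 1 = 0"
    and nonneg: "\<And>x. x \<in> {0..1} \<Longrightarrow> 0 \<le> g x"
    and dec: "\<And>x y. x \<in> {0..1} \<Longrightarrow> y \<in> {0..1} \<Longrightarrow> x \<le> y \<Longrightarrow> g y \<le> g x"
    and apos: "0 < \<alpha>" and alow: "\<And>x. x \<in> {0..1} \<Longrightarrow> \<alpha> - x \<le> \<alpha> * g x"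
begin

definition "\<beta> = Inf {x\<in>{0..1}. g x = 0}"

lemma beta_props: "\<beta> \<in> {0..1}" "g \<beta> = 0"
proof -
  let ?Z = "{x\<in>{0..1}. g x = 0}"
  have "closed ?Z" by (rule continuous_closed_preimage_constant[OF cont]) auto
  moreover have "?Z \<noteq> {}" using g1 by auto
  moreover have "bdd_below ?Z" by (auto intro: bdd_belowI[of _ 0])
  ultimately have "\<beta> \<in> ?Z" unfolding \<beta>_def by (rule closed_contains_Inf[rotated 2])
  then show "\<beta> \<in> {0..1}" "g \<beta> = 0" by auto
qed

lemma g_pos: "x \<in> {0..1} \<Longrightarrow> x < \<beta> \<Longrightarrow> 0 < g x"
proof (rule ccontr)
  assume x: "x \<in> {0..1}" "x < \<beta>" "\<not> 0 < g x"
  then have "g x = 0" using nonneg[OF x(1)] by auto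
  then have "\<beta> \<le> x" unfolding \<beta>_def using x(1) by (intro cInf_lower) (auto intro: bdd_belowI[of _ 0])
  then show False using x by auto
qed

lemma g_le1: "x \<in> {0..1} \<Longrightarrow> g x \<le> 1"
  using dec[of 0 x] g0 by auto

lemma alpha_le_beta: "\<alpha> \<le> \<beta>"
proof (rule ccontr)
  assume "\<not> \<alpha> \<le> \<beta>"
  then have "\<alpha> - \<beta> > 0" by auto
  with alow[OF beta_props(1)] beta_props(2) show False by auto
qed

lemma beta_pos: "0 < \<beta>" using apos alpha_le_beta by auto

lemma g_zero: "x \<in> {0..1} \<Longrightarrow> \<beta> \<le> x \<Longrightarrow> g x = 0"
  using dec[of \<beta> x] beta_props nonneg[of x] by auto

lemma convD: "x \<in> {0..1} \<Longrightarrow> y \<in> {0..1} \<Longrightarrow> 0 \<le> t \<Longrightarrow> t \<le> 1 \<Longrightarrow>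
    g ((1 - t) * x + t * y) \<le> (1 - t) * g x + t * g y"
  using convex_onD[OF conv, of t x y] by simp

lemma g_strict: "0 \<le> x \<Longrightarrow> x < y \<Longrightarrow> y \<le> \<beta> \<Longrightarrow> g y < g x"
proof -
  assume xy: "0 \<le> x" "x < y" "y \<le> \<beta>"
  have b1: "\<beta> \<le> 1" using beta_props by auto
  define t where "t = (y - x) / (\<beta> - x)"
  have t: "0 < t" "t \<le> 1" using xy unfolding t_def by (auto simp: field_simps)
  have "t * (\<beta> - x) = y - x" using xy unfolding t_def by (auto simp: field_simps)
  then have ye: "y = (1 - t) * x + t * \<beta>" by (auto simp: algebra_simps)
  have "g y \<le> (1 - t) * g x + t * g \<beta>"
    unfolding ye by (rule convD) (use xy b1 t beta_props in auto)
  also have "\<dots> = (1 - t) * g x" using beta_props by simp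
  also have "\<dots> < g x" using t g_pos[of x] xy b1 by auto
  finally show ?thesis .
qed

lemma g_chord: "x \<in> {0..\<beta>} \<Longrightarrow> g x \<le> 1 - x / \<beta>"
proof -
  assume x: "x \<in> {0..\<beta>}"
  have b1: "\<beta> \<le> 1" using beta_props by auto
  have xe: "x = (1 - x/\<beta>) * 0 + (x/\<beta>) * \<beta>" using beta_pos by simp
  have "g x \<le> (1 - x/\<beta>) * g 0 + (x/\<beta>) * g \<beta>"
    by (subst xe, rule convD) (use x b1 beta_pos in \<open>auto simp: field_simps\<close>)
  then show ?thesis using g0 beta_props by simp
qed

lemma gstar_g: "c \<in> {0..<\<beta>} \<Longrightarrow> gstar g (g c) = c"
proof -
  assume c: "c \<in> {0..<\<beta>}"
  have b1: "\<beta> \<le> 1" using beta_props by auto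
  have key: "g c \<le> g x \<longleftrightarrow> x \<le> c" if x: "x \<in> {0..1}" for x
  proof
    assume "g c \<le> g x"
    show "x \<le> c"
    proof (rule ccontr)
      assume "\<not> x \<le> c"
      then have "c < x" by simp
      show False
      proof (cases "x \<le> \<beta>")
        case True then show False using g_strict[of c x] c x \<open>c < x\<close> \<open>g c \<le> g x\<close> by auto
      next
        case False then show False using g_zero[of x] g_pos[of c] c x b1 \<open>g c \<le> g x\<close> by auto
      qed
    qed
  next
    assume "x \<le> c" then show "g c \<le> g x" using dec[of x c] c b1 x by auto
  qed
  have "{x\<in>{0..1}. g c \<le> g x} = {0..c}"
    using key c b1 by auto
  then show ?thesis unfolding gstar_def using c by simp
qed

lemma g_onto: "y \<in> {0..1} \<Longrightarrow> \<exists>c\<in>{0..\<beta>}. g c = y"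
proof -
  assume y: "y \<in> {0..1}"
  have b1: "\<beta> \<le> 1" using beta_props by auto
  have "continuous_on {0..\<beta>} g" by (rule continuous_on_subset[OF cont]) (use b1 in auto)
  then show ?thesis using IVT2'[of g \<beta> y 0] y beta_props beta_pos g0 by auto
qed

definition "\<phi> y = (if y = 0 then \<beta> else gstar g y)"

lemma phi_g: "c \<in> {0..\<beta>} \<Longrightarrow> \<phi> (g c) = c"
proof (cases "c = \<beta>")
  case True then show ?thesis using beta_props by (simp add: \<phi>_def)
next
  case False
  assume c: "c \<in> {0..\<beta>}"
  then have "c \<in> {0..<\<beta>}" using False by auto
  moreover then have "g c \<noteq> 0" using g_pos[of c] beta_props by auto
  ultimately show ?thesis by (simp add: \<phi>_def gstar_g)
qed

lemma phi_props: "y \<in> {0..1} \<Longrightarrow> \<phi> y \<in> {0..\<beta>} \<and> g (\<phi> y) = y"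
  using g_onto phi_g by metis

lemma b1: "\<beta> \<le> 1" using beta_props by auto

lemma phi_cont: "continuous_on {0..1} \<phi>"
proof -
  have "g ` {0..\<beta>} = {0..1}"
  proof
    show "g ` {0..\<beta>} \<subseteq> {0..1}" using nonneg g_le1 b1 by auto
    show "{0..1} \<subseteq> g ` {0..\<beta>}" using g_onto by fastforce
  qed
  moreover have "continuous_on (g ` {0..\<beta>}) \<phi>"
    by (rule continuous_on_inv) (use phi_g continuous_on_subset[OF cont] b1 in auto)
  ultimately show ?thesis by simp
qed

lemma phi_convex: "convex_on {0..1} \<phi>"
proof (rule convex_onI)
  fix t x y :: real assume t: "0 < t" "t < 1" and x: "x \<in> {0..1}" and y: "y \<in> {0..1}"
  define u where "u = \<phi> x"
  define v where "v = \<phi> y"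
  have u: "u \<in> {0..\<beta>}" "g u = x" using phi_props[OF x] u_def by auto
  have v: "v \<in> {0..\<beta>}" "g v = y" using phi_props[OF y] v_def by auto
  define w where "w = (1 - t) * u + t * v"
  have w: "w \<in> {0..\<beta>}"
  proof -
    have "(1 - t) * u \<le> (1 - t) * \<beta>" "t * v \<le> t * \<beta>" "0 \<le> (1 - t) * u" "0 \<le> t * v"
      using u v t by (auto intro: mult_left_mono)
    moreover have "(1 - t) * \<beta> + t * \<beta> = \<beta>" by (simp add: algebra_simps)
    ultimately show ?thesis unfolding w_def by auto
  qed
  define z where "z = (1 - t) * x + t * y"
  have z: "z \<in> {0..1}"
  proof -
    have "(1 - t) * x \<le> (1 - t) * 1" "t * y \<le> t * 1" "0 \<le> (1 - t) * x" "0 \<le> t * y"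
      using x y t by (auto intro: mult_left_mono)
    then show ?thesis unfolding z_def by auto
  qed
  have gw: "g w \<le> z" unfolding w_def z_def
    using convD[of u v t] u v t b1 by auto
  define p where "p = \<phi> z"
  have p: "p \<in> {0..\<beta>}" "g p = z" using phi_props[OF z] p_def by auto
  have "p \<le> w"
  proof (rule ccontr)
    assume "\<not> p \<le> w"
    then have "g p < g w" using g_strict[of w p] w p by auto
    then show False using gw p by auto
  qed
  then show "\<phi> ((1 - t) *\<^sub>R x + t *\<^sub>R y) \<le> (1 - t) * \<phi> x + t * \<phi> y"
    using p_def z_def w_def u_def v_def by simp
qed auto

lemma phi_upper: "y \<in> {0..1} \<Longrightarrow> \<phi> y \<le> \<beta> * (1 - y)"
proof -
  assume y: "y \<in> {0..1}"
  have "g (\<phi> y) \<le> 1 - \<phi> y / \<beta>" by (rule g_chord) (use phi_props[OF y] in auto)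
  then have "y \<le> 1 - \<phi> y / \<beta>" using phi_props[OF y] by simp
  then show ?thesis using beta_pos by (simp add: field_simps)
qed

lemma phi_lower: "y \<in> {0..1} \<Longrightarrow> \<alpha> * (1 - y) \<le> \<phi> y"
proof -
  assume y: "y \<in> {0..1}"
  have "\<phi> y \<in> {0..1}" using phi_props[OF y] b1 by auto
  then have "\<alpha> - \<phi> y \<le> \<alpha> * g (\<phi> y)" by (rule alow)
  then show ?thesis using phi_props[OF y] by (simp add: algebra_simps)
qed

lemma phi_nonneg: "y \<in> {0..1} \<Longrightarrow> 0 \<le> \<phi> y" using phi_props by auto
lemma phi_le_beta: "y \<in> {0..1} \<Longrightarrow> \<phi> y \<le> \<beta>" using phi_props by auto

lemma phi_strict: "x \<in> {0..1} \<Longrightarrow> y \<in> {0..1} \<Longrightarrow> x < y \<Longrightarrow> \<phi> y < \<phi> x"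
proof (rule ccontr)
  assume x: "x \<in> {0..1}" and y: "y \<in> {0..1}" and xy: "x < y" and "\<not> \<phi> y < \<phi> x"
  then have "\<phi> x \<le> \<phi> y" by simp
  then have "g (\<phi> y) \<le> g (\<phi> x)" using dec[of "\<phi> x" "\<phi> y"] phi_props[OF x] phi_props[OF y] b1 by auto
  then show False using phi_props[OF x] phi_props[OF y] xy by auto
qed

lemma phi_0: "\<phi> 0 = \<beta>" by (simp add: \<phi>_def)
lemma phi_1: "\<phi> 1 = 0" using phi_g[of 0] g0 beta_pos by simp

definition "\<gamma> = integral {0..1} g"

lemma phi_integral: "(\<phi> has_integral \<gamma>) {0..1}"
proof -
  define G where "G x = g (max 0 (min 1 x))" for x
  have cG: "continuous_on UNIV G" unfolding G_def
    by (rule continuous_on_compose2[OF cont]) (auto intro!: continuous_intros)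
  have Gg: "x \<in> {0..1} \<Longrightarrow> G x = g x" for x by (simp add: G_def)
  have intg: "g integrable_on {0..1}" using cont by (rule integrable_continuous_interval)
  have IG: "(G has_integral \<gamma>) {0..1}"
    using integrable_integral[OF intg] unfolding \<gamma>_def
    by (subst has_integral_cong[of _ G g]) (auto simp: Gg)
  have intp: "\<phi> integrable_on {0..1}" using phi_cont by (rule integrable_continuous_interval)
  have IP: "(\<phi> has_integral (integral {0..1} \<phi>)) {0<..1}"
  proof -
    have "(\<phi> has_integral (integral {0..1} \<phi>)) {0..1}" using intp by (rule integrable_integral)
    then show ?thesis
      by (subst has_integral_spike_set_eq[where S="{0<..1}" and T="{0..1}"]) (rule negligible_subset[of "{0}"]; force)+
  qed
  have PG: "y \<le> G x \<longleftrightarrow> x \<le> \<phi> y" if x: "x \<in> {0..1}" and y: "y \<in> {0<..1}" for x y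
  proof -
    define c where "c = \<phi> y"
    have c: "c \<in> {0..\<beta>}" "g c = y" using phi_props[of y] y c_def by auto
    have cb: "c < \<beta>" using c y beta_props by (cases "c = \<beta>") auto
    show ?thesis unfolding Gg[OF x] c_def[symmetric]
    proof
      assume "y \<le> g x"
      show "x \<le> c"
      proof (rule ccontr)
        assume "\<not> x \<le> c"
        then have "c < x" by simp
        show False
        proof (cases "x \<le> \<beta>")
          case True then show False using g_strict[of c x] c x \<open>c < x\<close> \<open>y \<le> g x\<close> by auto
        next
          case False then show False using g_zero[of x] c x y \<open>y \<le> g x\<close> by auto
        qed
      qed
    next
      assume "x \<le> c" then show "y \<le> g x" using dec[of x c] c b1 x by auto
    qed
  qed
  have "\<gamma> = integral {0..1} \<phi>"
  proof (rule area_swap[OF cG _ PG _ IG IP])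
    fix x :: real assume "x \<in> {0..1}" then show "0 \<le> G x \<and> G x \<le> 1" using Gg nonneg g_le1 by simp
  next
    fix y :: real assume "y \<in> {0<..1}" then have "y \<in> {0..1}" by auto
    then show "0 \<le> \<phi> y \<and> \<phi> y \<le> 1" using phi_props[of y] b1 by auto
  qed
  then show ?thesis using integrable_integral[OF intp] by simp
qed

end


lemma quad_int:
  fixes a b c0 c1 c2 :: real
  assumes "a \<le> b"
  shows "((\<lambda>y. c0 + c1 * y + c2 * y^2) has_integral
          (c0 * (b - a) + c1 * (b^2 - a^2) / 2 + c2 * (b^3 - a^3) / 3)) {a..b}"
proof -
  have "((\<lambda>y. c0 + c1 * y + c2 * y^2) has_integral
     ((c0 * b + c1 * b^2 / 2 + c2 * b^3 / 3) - (c0 * a + c1 * a^2 / 2 + c2 * a^3 / 3))) {a..b}"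
  proof (rule fundamental_theorem_of_calculus[OF assms])
    fix x assume "x \<in> {a..b}"
    show "((\<lambda>y. c0 * y + c1 * y^2 / 2 + c2 * y^3 / 3) has_vector_derivative (c0 + c1 * x + c2 * x^2)) (at x within {a..b})"
      unfolding has_real_derivative_iff_has_vector_derivative[symmetric]
      by (auto intro!: derivative_eq_intros simp: power2_eq_square)
  qed
  then show ?thesis by (simp add: algebra_simps diff_divide_distrib)
qed

lemma sign_int:
  fixes d :: "real \<Rightarrow> real"
  assumes "(d has_integral 0) {0..1}" "((\<lambda>y. y * d y) has_integral K) {0..1}"
    and "\<And>y. y \<in> {0..1} \<Longrightarrow> 0 \<le> (y - a) * d y"
  shows "0 \<le> K"
proof -
  have "((\<lambda>y. y * d y - a * d y) has_integral (K - a * 0)) {0..1}"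
    by (intro has_integral_diff assms has_integral_mult_right)
  then have "((\<lambda>y. (y - a) * d y) has_integral K) {0..1}" by (simp add: algebra_simps)
  then show ?thesis using has_integral_nonneg assms(3) by blast
qed

context gsetup
begin

definition "\<Phi> x = integral {0..x} \<phi>"

lemma phi_intg: "{a..b} \<subseteq> {0..1} \<Longrightarrow> \<phi> integrable_on {a..b}"
  by (rule integrable_continuous_interval, rule continuous_on_subset[OF phi_cont])

lemma Phi_split: "0 \<le> a \<Longrightarrow> a \<le> b \<Longrightarrow> b \<le> 1 \<Longrightarrow> \<Phi> b = \<Phi> a + integral {a..b} \<phi>"
proof -
  assume ab: "0 \<le> a" "a \<le> b" "b \<le> 1"
  then have "\<phi> integrable_on {0..b}" by (intro phi_intg) auto
  then show ?thesis unfolding \<Phi>_def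
    using Henstock_Kurzweil_Integration.integral_combine[of 0 a b \<phi>] ab by auto
qed

lemma Phi_1: "\<Phi> 1 = \<gamma>" unfolding \<Phi>_def using phi_integral by (rule integral_unique)
lemma Phi_0: "\<Phi> 0 = 0" unfolding \<Phi>_def by simp

lemma Phi_deriv: "x \<in> {0..1} \<Longrightarrow> (\<Phi> has_real_derivative \<phi> x) (at x within {0..1})"
  unfolding has_real_derivative_iff_has_vector_derivative \<Phi>_def
  by (rule integral_has_vector_derivative[OF phi_cont])

lemma int_bounds:
  assumes "0 \<le> a" "a \<le> b" "b \<le> 1"
  shows "(b - a) * \<phi> b \<le> integral {a..b} \<phi>" "integral {a..b} \<phi> \<le> (b - a) * \<phi> a"
proof -
  have "integral {a..b} (\<lambda>x. \<phi> b) \<le> integral {a..b} \<phi>"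
    by (rule integral_le) (use assms phi_intg phi_strict in \<open>auto simp: less_eq_real_def\<close>)
  then show "(b - a) * \<phi> b \<le> integral {a..b} \<phi>" using assms by simp
  have "integral {a..b} \<phi> \<le> integral {a..b} (\<lambda>x. \<phi> a)"
    by (rule integral_le) (use assms phi_intg phi_strict in \<open>auto simp: less_eq_real_def\<close>)
  then show "integral {a..b} \<phi> \<le> (b - a) * \<phi> a" using assms by simp
qed

lemma gamma_ge: "\<alpha> / 2 \<le> \<gamma>" and gamma_le: "\<gamma> \<le> \<beta> / 2"
proof -
  have l: "((\<lambda>y. \<alpha> + (-\<alpha>) * y + 0 * y^2) has_integral (\<alpha> / 2)) {0..1}"
    using quad_int[of 0 1 \<alpha> "-\<alpha>" 0] by simp
  have "\<alpha> / 2 \<le> \<gamma>"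
    by (rule has_integral_le[OF l phi_integral]) (use phi_lower in \<open>auto simp: algebra_simps\<close>)
  then show "\<alpha> / 2 \<le> \<gamma>" .
  have u: "((\<lambda>y. \<beta> + (-\<beta>) * y + 0 * y^2) has_integral (\<beta> / 2)) {0..1}"
    using quad_int[of 0 1 \<beta> "-\<beta>" 0] by simp
  show "\<gamma> \<le> \<beta> / 2"
    by (rule has_integral_le[OF phi_integral u]) (use phi_upper in \<open>auto simp: algebra_simps\<close>)
qed

lemma gamma_pos: "0 < \<gamma>" using gamma_ge apos by auto

lemma Tg_eq: "x \<in> {0..1} \<Longrightarrow> T g x = 1 - \<Phi> x / \<gamma>"
proof -
  assume x: "x \<in> {0..1}"
  have "integral {x..1} (gstar g) = integral {x..1} \<phi>"
    by (rule integral_spike[of "{0}"]) (auto simp: \<phi>_def)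
  also have "\<dots> = \<gamma> - \<Phi> x" using Phi_split[of x 1] x Phi_1 by auto
  finally show ?thesis unfolding T_def \<gamma>_def[symmetric] using gamma_pos by (simp add: field_simps)
qed

definition "h x = - \<phi> x / \<gamma>"

lemma Tg_deriv: "x \<in> {0..1} \<Longrightarrow> (T g has_real_derivative h x) (at x within {0..1})"
proof -
  assume x: "x \<in> {0..1}"
  have "((\<lambda>x. 1 - \<Phi> x / \<gamma>) has_real_derivative (0 - \<phi> x / \<gamma>)) (at x within {0..1})"
    using gamma_pos by (auto intro!: derivative_eq_intros Phi_deriv[OF x])
  then have "((\<lambda>x. 1 - \<Phi> x / \<gamma>) has_real_derivative (- \<phi> x / \<gamma>)) (at x within {0..1})" by simp
  then show ?thesis unfolding h_def
    by (rule has_field_derivative_transform_within[where d=1]) (use x Tg_eq in auto)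
qed

lemma Tg_cont: "continuous_on {0..1} (T g)"
  by (rule DERIV_continuous_on[OF Tg_deriv])

lemma Phi_strict: "0 \<le> x \<Longrightarrow> x < y \<Longrightarrow> y \<le> 1 \<Longrightarrow> \<Phi> x < \<Phi> y"
proof -
  assume xy: "0 \<le> x" "x < y" "y \<le> 1"
  have q: "((\<lambda>t. 1 + (-1) * t + 0 * t^2) has_integral (1 * (y - x) + (-1) * (y^2 - x^2) / 2 + 0 * (y^3 - x^3) / 3)) {x..y}"
    by (rule quad_int) (use xy in auto)
  have "\<phi> integrable_on {x..y}" by (rule phi_intg) (use xy in auto)
  then have "\<alpha> * (1 * (y - x) + (-1) * (y^2 - x^2) / 2 + 0 * (y^3 - x^3) / 3) \<le> integral {x..y} \<phi>"
    using has_integral_le[OF has_integral_mult_right[OF q, of \<alpha>] integrable_integral] phi_lower xy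
    by (auto simp: algebra_simps)
  moreover have "0 < 1 * (y - x) + (-1) * (y^2 - x^2) / 2 + 0 * (y^3 - x^3) / 3"
  proof -
    have "1 * (y - x) + (-1) * (y^2 - x^2) / 2 + 0 * (y^3 - x^3) / 3 = (y - x) * (1 - (x + y) / 2)"
      by (simp add: power2_eq_square field_simps)
    moreover have "0 < (y - x) * (1 - (x + y) / 2)" using xy by (intro mult_pos_pos) auto
    ultimately show ?thesis by simp
  qed
  ultimately have "0 < integral {x..y} \<phi>" using apos by (smt (verit) mult_pos_pos)
  then show ?thesis using Phi_split[of x y] xy by auto
qed

lemma Tg_strict: "x \<in> {0..1} \<Longrightarrow> y \<in> {0..1} \<Longrightarrow> x < y \<Longrightarrow> T g y < T g x"
  using Phi_strict[of x y] Tg_eq gamma_pos by (auto simp: divide_strict_right_mono)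

lemma Tg_0: "T g 0 = 1" using Tg_eq[of 0] Phi_0 by simp
lemma Tg_1: "T g 1 = 0" using Tg_eq[of 1] Phi_1 gamma_pos by simp

lemma Tg_nonneg: "x \<in> {0..1} \<Longrightarrow> 0 \<le> T g x"
  using Tg_strict[of x 1] Tg_1 by (cases "x = 1") auto

lemma Tg_convex: "convex_on {0..1} (T g)"
proof (rule convex_on_linorderI)
  fix t x y :: real assume t: "0 < t" "t < 1" and x: "x \<in> {0..1}" and y: "y \<in> {0..1}" and xy: "x < y"
  define z where "z = (1 - t) * x + t * y"
  have hzx: "z - x = t * (y - x)" and hyz: "y - z = (1 - t) * (y - x)" unfolding z_def by (auto simp: algebra_simps)
  have h1: "0 \<le> t * (y - x)" using t xy by auto
  have h2: "0 \<le> (1 - t) * (y - x)" using t xy by auto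
  have hz1: "x \<le> z" using h1 hzx by linarith
  have hz2: "z \<le> y" using h2 hyz by linarith
  note hz = hz1 hz2
  have A: "(z - x) * \<phi> z \<le> integral {x..z} \<phi>" by (rule int_bounds) (use x y hz in auto)
  have B: "integral {z..y} \<phi> \<le> (y - z) * \<phi> z" by (rule int_bounds) (use x y hz in auto)
  have ez: "\<Phi> z = \<Phi> x + integral {x..z} \<phi>" by (rule Phi_split) (use x y hz in auto)
  have ey: "\<Phi> y = \<Phi> z + integral {z..y} \<phi>" by (rule Phi_split) (use x y hz in auto)
  have "(1 - t) * ((z - x) * \<phi> z) \<le> (1 - t) * integral {x..z} \<phi>"
    using A t by (intro mult_left_mono) auto
  moreover have "t * integral {z..y} \<phi> \<le> t * ((y - z) * \<phi> z)"
    using B t by (intro mult_left_mono) auto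
  moreover have "(1 - t) * ((z - x) * \<phi> z) = t * ((y - z) * \<phi> z)"
    by (simp only: hzx hyz) (simp add: algebra_simps)
  ultimately have key: "(1 - t) * \<Phi> x + t * \<Phi> y \<le> \<Phi> z"
    using ez ey by (simp add: algebra_simps)
  have zz: "z \<in> {0..1}" using x y hz by auto
  have "T g z = 1 - \<Phi> z / \<gamma>" by (rule Tg_eq[OF zz])
  also have "\<dots> \<le> 1 - ((1 - t) * \<Phi> x + t * \<Phi> y) / \<gamma>"
    using key gamma_pos by (simp add: divide_right_mono)
  also have "\<dots> = (1 - t) * (1 - \<Phi> x / \<gamma>) + t * (1 - \<Phi> y / \<gamma>)"
    using gamma_pos by (simp add: field_simps)
  also have "\<dots> = (1 - t) * T g x + t * T g y" using Tg_eq x y by simp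
  finally show "T g ((1 - t) *\<^sub>R x + t *\<^sub>R y) \<le> (1 - t) * T g x + t * T g y"
    unfolding z_def by simp
qed auto

lemma stride_Tg: "stride (T g) = \<gamma> / \<beta>"
proof -
  let ?S = "{a. 0 \<le> a \<and> (\<forall>x\<in>{0..1}. a - x \<le> a * T g x)}"
  have cond: "a - x \<le> a * T g x \<longleftrightarrow> a * \<Phi> x \<le> x * \<gamma>" if "x \<in> {0..1}" for a x
  proof -
    have "a - x \<le> a * T g x \<longleftrightarrow> a - x \<le> a - a * \<Phi> x / \<gamma>"
      using Tg_eq[OF that] by (simp add: right_diff_distrib)
    also have "\<dots> \<longleftrightarrow> a * \<Phi> x / \<gamma> \<le> x" by linarith
    also have "\<dots> \<longleftrightarrow> a * \<Phi> x \<le> x * \<gamma>" using gamma_pos by (simp add: pos_divide_le_eq)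
    finally show ?thesis .
  qed
  have mem: "\<gamma> / \<beta> \<in> ?S"
  proof -
    have "\<gamma> / \<beta> * \<Phi> x \<le> x * \<gamma>" if x: "x \<in> {0..1}" for x
    proof -
      have "\<Phi> x \<le> x * \<beta>" using int_bounds(2)[of 0 x] x phi_0 Phi_0 Phi_split[of 0 x] by auto
      then have "\<gamma> * \<Phi> x \<le> \<gamma> * (x * \<beta>)" using gamma_pos by (intro mult_left_mono) auto
      then show ?thesis using beta_pos by (simp add: field_simps)
    qed
    then show ?thesis using cond gamma_pos beta_pos by auto
  qed
  have ub: "a \<le> \<gamma> / \<beta>" if a: "a \<in> ?S" for a
  proof (rule ccontr)
    assume "\<not> a \<le> \<gamma> / \<beta>"
    then have agt: "\<gamma> / \<beta> < a" by simp
    have "0 < \<gamma> / \<beta>" using gamma_pos beta_pos by simp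
    then have apos': "0 < a" using agt by linarith
    have lt: "\<gamma> / a < \<beta>" using agt apos' beta_pos by (simp add: field_simps)
    obtain d where d: "d > 0" "\<And>x'. x' \<in> {0..1} \<Longrightarrow> dist x' 0 < d \<Longrightarrow> dist (\<phi> x') (\<phi> 0) < \<beta> - \<gamma> / a"
      using phi_cont lt unfolding continuous_on_iff by (metis atLeastAtMost_iff diff_gt_0_iff_gt order_refl zero_le_one)
    define x where "x = min 1 (d / 2)"
    have x: "x \<in> {0..1}" "0 < x" using d unfolding x_def by auto
    have "dist x 0 < d" using d x unfolding x_def by auto
    then have "\<gamma> / a < \<phi> x" using d(2)[OF x(1)] phi_0 by (auto simp: dist_real_def)
    moreover have "x * \<phi> x \<le> \<Phi> x" using int_bounds(1)[of 0 x] x Phi_0 Phi_split[of 0 x] by auto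
    moreover have "x * (\<gamma> / a) < x * \<phi> x" using calculation(1) x by (intro mult_strict_left_mono) auto
    ultimately have "x * (\<gamma> / a) < \<Phi> x" by linarith
    then have "x * \<gamma> < a * \<Phi> x" using apos' by (simp add: field_simps)
    moreover have "a - x \<le> a * T g x" using a x(1) by auto
    then have "a * \<Phi> x \<le> x * \<gamma>" using cond[OF x(1)] by simp
    ultimately show False by simp
  qed
  show ?thesis unfolding stride_def
    by (rule cSup_eq_maximum[OF mem]) (use ub in blast)
qed

definition "J = integral {0..1} (\<lambda>y. y * \<phi> y)"

lemma J_int: "((\<lambda>y. y * \<phi> y) has_integral J) {0..1}"
  unfolding J_def by (rule integrable_integral, rule integrable_continuous_interval)
    (intro continuous_intros phi_cont)

lemma int_Tg: "(T g has_integral (J / \<gamma>)) {0..1}"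
proof -
  have cP: "continuous_on {0..1} \<Phi>" by (rule DERIV_continuous_on[OF Phi_deriv])
  have "((\<lambda>x. \<Phi> x + x * \<phi> x) has_integral (1 * \<Phi> 1 - 0 * \<Phi> 0)) {0..1}"
  proof (rule fundamental_theorem_of_calculus[of 0 1 "\<lambda>x. x * \<Phi> x"])
    fix x :: real assume x: "x \<in> {0..1}"
    show "((\<lambda>x. x * \<Phi> x) has_vector_derivative (\<Phi> x + x * \<phi> x)) (at x within {0..1})"
      unfolding has_real_derivative_iff_has_vector_derivative[symmetric]
      by (auto intro!: derivative_eq_intros Phi_deriv[OF x])
  qed simp
  then have s: "((\<lambda>x. \<Phi> x + x * \<phi> x) has_integral \<gamma>) {0..1}" using Phi_1 by simp
  have "((\<lambda>x. (\<Phi> x + x * \<phi> x) - x * \<phi> x) has_integral (\<gamma> - J)) {0..1}"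
    by (rule has_integral_diff[OF s J_int])
  then have P: "(\<Phi> has_integral (\<gamma> - J)) {0..1}" by simp
  have one: "((\<lambda>x. 1) has_integral (1::real)) {0..1::real}"
    using quad_int[of 0 1 1 0 0] by simp
  have "((\<lambda>x. 1 - \<Phi> x / \<gamma>) has_integral (1 - (\<gamma> - J) / \<gamma>)) {0..1}"
    by (intro has_integral_diff one has_integral_divide P)
  then have "((\<lambda>x. 1 - \<Phi> x / \<gamma>) has_integral (J / \<gamma>)) {0..1}"
    using gamma_pos by (simp add: field_simps)
  then show ?thesis by (subst has_integral_cong[of _ _ "\<lambda>x. 1 - \<Phi> x / \<gamma>"]) (auto simp: Tg_eq)
qed

lemma phi_conv_lin:
  assumes "u \<in> {0..1}" "v \<in> {0..1}" "0 \<le> s" "s \<le> 1"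
  shows "\<phi> ((1 - s) * u + s * v) + p + q * ((1 - s) * u + s * v)
     \<le> (1 - s) * (\<phi> u + p + q * u) + s * (\<phi> v + p + q * v)"
proof -
  have "\<phi> ((1 - s) * u + s * v) \<le> (1 - s) * \<phi> u + s * \<phi> v"
    using convex_onD[OF phi_convex, of s u v] assms by simp
  then show ?thesis by (simp add: algebra_simps)
qed

lemma int_lin_phi:
  "((\<lambda>y. (c0 + c1 * y + c2 * y^2) + c * \<phi> y) has_integral
      ((c0 * (1 - 0) + c1 * (1^2 - 0^2) / 2 + c2 * (1^3 - 0^3) / 3) + c * \<gamma>)) {0..1}"
  by (intro has_integral_add quad_int has_integral_mult_right phi_integral) simp

lemma int_lin_yphi:
  "((\<lambda>y. (c0 + c1 * y + c2 * y^2) + c * (y * \<phi> y)) has_integral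
      ((c0 * (1 - 0) + c1 * (1^2 - 0^2) / 2 + c2 * (1^3 - 0^3) / 3) + c * J)) {0..1}"
  by (intro has_integral_add quad_int has_integral_mult_right J_int) simp

lemma J_ge: "\<alpha> / 6 \<le> J"
proof -
  have "((\<lambda>y. (0 + \<alpha> * y + (-\<alpha>) * y^2)) has_integral (0 * (1 - 0) + \<alpha> * (1^2 - 0^2) / 2 + (-\<alpha>) * (1^3 - 0^3) / 3)) {0..1}"
    by (rule quad_int) simp
  then have q: "((\<lambda>y. (0 + \<alpha> * y + (-\<alpha>) * y^2)) has_integral (\<alpha> / 6)) {0..1}" by simp
  show ?thesis
  proof (rule has_integral_le[OF q J_int])
    fix y :: real assume y: "y \<in> {0..1}"
    have "y * (\<alpha> * (1 - y)) \<le> y * \<phi> y" using phi_lower[OF y] y by (intro mult_left_mono) auto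
    then show "0 + \<alpha> * y + (-\<alpha>) * y^2 \<le> y * \<phi> y" by (simp add: algebra_simps power2_eq_square)
  qed
qed

lemma J_le: "J \<le> \<gamma> / 3"
proof -
  define D where "D y = \<phi> y + (- 2 * \<gamma>) + (2 * \<gamma>) * y" for y
  define S where "S = {y\<in>{0..1}. D y \<le> 0}"
  define a where "a = Inf S"
  have D1: "D 1 = 0" unfolding D_def using phi_1 by simp
  have ne: "1 \<in> S" unfolding S_def using D1 by simp
  have bdd: "bdd_below S" unfolding S_def by (auto intro: bdd_belowI[of _ 0])
  have up: "D y \<le> 0" if y0: "y0 \<in> {0..1}" "D y0 \<le> 0" "y0 < y" "y \<le> 1" for y0 y
  proof -
    define s where "s = (y - y0) / (1 - y0)"
    have s: "0 \<le> s" "s \<le> 1" using y0 unfolding s_def by (auto simp: field_simps)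
    have "s * (1 - y0) = y - y0" using y0 unfolding s_def by (auto simp: field_simps)
    then have ye: "y = (1 - s) * y0 + s * 1" by (auto simp: algebra_simps)
    have inst: "\<phi> ((1 - s) * y0 + s * 1) + (- 2 * \<gamma>) + (2 * \<gamma>) * ((1 - s) * y0 + s * 1)
     \<le> (1 - s) * (\<phi> y0 + (- 2 * \<gamma>) + (2 * \<gamma>) * y0) + s * (\<phi> 1 + (- 2 * \<gamma>) + (2 * \<gamma>) * 1)"
      by (rule phi_conv_lin) (use y0 s in auto)
    have "D y \<le> (1 - s) * D y0 + s * D 1"
      unfolding D_def using inst[folded ye] .
    also have "\<dots> \<le> 0" using s y0 D1 by (simp add: mult_nonneg_nonpos)
    finally show ?thesis .
  qed
  have sign: "0 \<le> (y - a) * (- D y)" if y: "y \<in> {0..1}" for y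
  proof (cases "D y \<le> 0")
    case True
    then have "y \<in> S" using y unfolding S_def by auto
    then have "a \<le> y" unfolding a_def using bdd by (rule cInf_lower)
    then show ?thesis using True mult_nonneg_nonneg[of "y - a" "- D y"] by simp
  next
    case False
    have "y \<le> a" unfolding a_def
    proof (rule cInf_greatest)
      show "S \<noteq> {}" using ne by auto
      fix z assume z: "z \<in> S"
      show "y \<le> z"
      proof (rule ccontr)
        assume "\<not> y \<le> z"
        then have "D y \<le> 0" using up[of z y] z y unfolding S_def by auto
        then show False using False by simp
      qed
    qed
    then show ?thesis using False mult_nonpos_nonpos[of "y - a" "- D y"] by simp
  qed
  have i1: "((\<lambda>y. - D y) has_integral 0) {0..1}"
  proof -
    have "((\<lambda>y. (2 * \<gamma> + (- 2 * \<gamma>) * y + 0 * y^2) + (-1) * \<phi> y) has_integral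
      ((2 * \<gamma> * (1 - 0) + (- 2 * \<gamma>) * (1^2 - 0^2) / 2 + 0 * (1^3 - 0^3) / 3) + (-1) * \<gamma>)) {0..1}"
      by (rule int_lin_phi)
    then show ?thesis by (simp add: D_def algebra_simps)
  qed
  have i2: "((\<lambda>y. y * (- D y)) has_integral (\<gamma> / 3 - J)) {0..1}"
  proof -
    have "((\<lambda>y. (0 + (2 * \<gamma>) * y + (- 2 * \<gamma>) * y^2) + (-1) * (y * \<phi> y)) has_integral
      ((0 * (1 - 0) + (2 * \<gamma>) * (1^2 - 0^2) / 2 + (- 2 * \<gamma>) * (1^3 - 0^3) / 3) + (-1) * J)) {0..1}"
      by (rule int_lin_yphi)
    moreover have "(\<lambda>y. (0 + (2 * \<gamma>) * y + (- 2 * \<gamma>) * y^2) + (-1) * (y * \<phi> y)) = (\<lambda>y. y * (- D y))"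
      by (auto simp: D_def algebra_simps power2_eq_square)
    ultimately show ?thesis by simp
  qed
  have "0 \<le> \<gamma> / 3 - J" by (rule sign_int[OF i1 i2 sign])
  then show ?thesis by simp
qed

lemma f_ineq: "\<alpha> * \<beta> - 4 * \<alpha> * \<gamma> + 4 * \<gamma>^2 \<le> 6 * (\<beta> - \<alpha>) * J"
proof (cases "2 * \<gamma> = \<alpha>")
  case True
  have "\<alpha> * \<beta> - 4 * \<alpha> * \<gamma> + 4 * \<gamma>^2 = (\<beta> - \<alpha>) * \<alpha>"
    by (simp add: True[symmetric] power2_eq_square algebra_simps)
  also have "\<dots> \<le> (\<beta> - \<alpha>) * (6 * J)" using J_ge alpha_le_beta by (intro mult_left_mono) auto
  finally show ?thesis by (simp add: algebra_simps)
next
  case False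
  define E where "E = \<gamma> - \<alpha> / 2"
  define b where "b = \<beta> - \<alpha>"
  have Epos: "0 < E" using False gamma_ge unfolding E_def by auto
  have Eb: "2 * E \<le> b" using gamma_le unfolding E_def b_def by auto
  then have bpos: "0 < b" using Epos by auto
  define t where "t = 2 * E / b"
  have t: "0 < t" "t \<le> 1" using Epos bpos Eb unfolding t_def by auto
  define l where "l y = (if y \<le> t then b + (- b / t) * y else 0)" for y
  define D where "D y = \<phi> y - \<alpha> * (1 - y) - l y" for y
  have l0: "\<And>y. y \<in> {t..1} \<Longrightarrow> l y = 0" using t unfolding l_def by auto
  have il: "(l has_integral (b * t / 2)) {0..1}"
  proof -
    have "((\<lambda>y. b + (- b / t) * y + 0 * y^2) has_integral (b * (t - 0) + (- b / t) * (t^2 - 0^2) / 2 + 0 * (t^3 - 0^3) / 3)) {0..t}"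
      by (rule quad_int) (use t in auto)
    then have "(l has_integral (b * t / 2)) {0..t}"
      using t by (subst has_integral_cong[of _ _ "\<lambda>y. b + (- b / t) * y + 0 * y^2"]) (auto simp: l_def power2_eq_square field_simps)
    moreover have "(l has_integral 0) {t..1}"
      by (subst has_integral_cong[of _ _ "\<lambda>y. 0"]) (auto simp: l0)
    ultimately show ?thesis using has_integral_combine[of 0 t 1 l "b * t / 2" 0] t by simp
  qed
  have iyl: "((\<lambda>y. y * l y) has_integral (b * t^2 / 6)) {0..1}"
  proof -
    have "((\<lambda>y. 0 + b * y + (- b / t) * y^2) has_integral (0 * (t - 0) + b * (t^2 - 0^2) / 2 + (- b / t) * (t^3 - 0^3) / 3)) {0..t}"
      by (rule quad_int) (use t in auto)
    then have "((\<lambda>y. y * l y) has_integral (b * t^2 / 6)) {0..t}"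
      using t by (subst has_integral_cong[of _ _ "\<lambda>y. 0 + b * y + (- b / t) * y^2"])
        (auto simp: l_def power2_eq_square power3_eq_cube field_simps)
    moreover have "((\<lambda>y. y * l y) has_integral 0) {t..1}"
      by (subst has_integral_cong[of _ _ "\<lambda>y. 0"]) (auto simp: l0)
    ultimately show ?thesis using has_integral_combine[of 0 t 1 "\<lambda>y. y * l y" "b * t^2 / 6" 0] t by simp
  qed
  have iD: "(D has_integral 0) {0..1}"
  proof -
    have "((\<lambda>y. ((-\<alpha>) + \<alpha> * y + 0 * y^2) + 1 * \<phi> y) has_integral
      (((-\<alpha>) * (1 - 0) + \<alpha> * (1^2 - 0^2) / 2 + 0 * (1^3 - 0^3) / 3) + 1 * \<gamma>)) {0..1}"
      by (rule int_lin_phi)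
    from has_integral_diff[OF this il]
    have H: "((\<lambda>y. ((-\<alpha>) + \<alpha> * y + 0 * y^2) + 1 * \<phi> y - l y) has_integral
      (((-\<alpha>) * (1 - 0) + \<alpha> * (1^2 - 0^2) / 2 + 0 * (1^3 - 0^3) / 3) + 1 * \<gamma> - b * t / 2)) {0..1}" .
    have H1: "(\<lambda>y. ((-\<alpha>) + \<alpha> * y + 0 * y^2) + 1 * \<phi> y - l y) = D"
      by (auto simp: D_def algebra_simps)
    have H2: "((-\<alpha>) * (1 - 0) + \<alpha> * (1^2 - 0^2) / 2 + 0 * (1^3 - 0^3) / 3) + 1 * \<gamma> - b * t / 2 = 0"
      using bpos unfolding t_def E_def by simp
    show ?thesis using H unfolding H1 H2 .
  qed
  have iyD: "((\<lambda>y. y * D y) has_integral (J - \<alpha> / 6 - b * t^2 / 6)) {0..1}"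
  proof -
    have "((\<lambda>y. (0 + (-\<alpha>) * y + \<alpha> * y^2) + 1 * (y * \<phi> y)) has_integral
      ((0 * (1 - 0) + (-\<alpha>) * (1^2 - 0^2) / 2 + \<alpha> * (1^3 - 0^3) / 3) + 1 * J)) {0..1}"
      by (rule int_lin_yphi)
    from has_integral_diff[OF this iyl]
    have "((\<lambda>y. (0 + (-\<alpha>) * y + \<alpha> * y^2) + 1 * (y * \<phi> y) - y * l y) has_integral
      ((0 * (1 - 0) + (-\<alpha>) * (1^2 - 0^2) / 2 + \<alpha> * (1^3 - 0^3) / 3) + 1 * J - b * t^2 / 6)) {0..1}" .
    moreover have "(\<lambda>y. (0 + (-\<alpha>) * y + \<alpha> * y^2) + 1 * (y * \<phi> y) - y * l y) = (\<lambda>y. y * D y)"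
      by (auto simp: D_def algebra_simps power2_eq_square)
    ultimately show ?thesis by simp
  qed
  have Dlin: "D y = \<phi> y + (- \<alpha> - b) + (\<alpha> + b / t) * y" if "y \<le> t" for y
    using that unfolding D_def l_def by (simp add: algebra_simps)
  have D0: "D 0 = 0" using Dlin[of 0] t phi_0 unfolding b_def by simp
  have Dge: "0 \<le> D y" if "y \<in> {t..1}" for y
    using that l0[OF that] phi_lower[of y] t unfolding D_def by auto
  have up: "0 < D y" if y0: "y0 \<in> {0..1}" "0 < D y0" "y0 < y" "y \<le> t" for y0 y
  proof -
    have y0pos: "0 < y0" using y0 D0 by (cases "y0 = 0") auto
    define s where "s = y0 / y"
    have s: "0 \<le> s" "s \<le> 1" using y0 y0pos unfolding s_def by auto
    have ye: "y0 = (1 - s) * 0 + s * y" using y0 y0pos unfolding s_def by auto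
    have inst: "\<phi> ((1 - s) * 0 + s * y) + (- \<alpha> - b) + (\<alpha> + b / t) * ((1 - s) * 0 + s * y)
     \<le> (1 - s) * (\<phi> 0 + (- \<alpha> - b) + (\<alpha> + b / t) * 0) + s * (\<phi> y + (- \<alpha> - b) + (\<alpha> + b / t) * y)"
      by (rule phi_conv_lin) (use y0 s t in auto)
    have "D y0 \<le> (1 - s) * D 0 + s * D y"
      using inst[folded ye] Dlin[of y0] Dlin[of 0] Dlin[of y] y0 t by simp
    then have "0 < s * D y" using y0 D0 by simp
    then show ?thesis using s by (simp add: zero_less_mult_iff)
  qed
  define S where "S = {y\<in>{0..1}. 0 < D y \<and> y \<le> t} \<union> {t}"
  define a where "a = Inf S"
  have bdd: "bdd_below S" unfolding S_def using t by (auto intro: bdd_belowI[of _ 0])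
  have aT: "a \<le> t" unfolding a_def by (rule cInf_lower[OF _ bdd]) (simp add: S_def)
  have sign: "0 \<le> (y - a) * D y" if y: "y \<in> {0..1}" for y
  proof (cases "t \<le> y")
    case True
    then show ?thesis using Dge[of y] y aT by (simp add: mult_nonneg_nonneg)
  next
    case False
    show ?thesis
    proof (cases "0 < D y")
      case True
      then have "y \<in> S" using y False unfolding S_def by auto
      then have "a \<le> y" unfolding a_def using bdd by (rule cInf_lower)
      then show ?thesis using True mult_nonneg_nonneg[of "y - a" "D y"] by simp
    next
      case nD: False
      have "y \<le> a" unfolding a_def
      proof (rule cInf_greatest)
        show "S \<noteq> {}" unfolding S_def by auto
        fix z assume z: "z \<in> S"
        show "y \<le> z"
        proof (rule ccontr)
          assume "\<not> y \<le> z"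
          then have zy: "z < y" by simp
          have "z \<noteq> t" using zy False by auto
          then have "z \<in> {0..1}" "0 < D z" using z unfolding S_def by auto
          then have "0 < D y" using up[of z y] zy False by auto
          then show False using nD by simp
        qed
      qed
      then show ?thesis using nD mult_nonpos_nonpos[of "y - a" "D y"] by simp
    qed
  qed
  have "0 \<le> J - \<alpha> / 6 - b * t^2 / 6" by (rule sign_int[OF iD iyD sign])
  then have "\<alpha> + b * t^2 \<le> 6 * J" by simp
  then have "b * (\<alpha> + b * t^2) \<le> b * (6 * J)" using bpos by (intro mult_left_mono) auto
  then have "b * \<alpha> + b * (b * t^2) \<le> 6 * b * J" by (simp add: algebra_simps)
  moreover have "b * (b * t^2) = 4 * E^2" using bpos unfolding t_def by (simp add: power2_eq_square field_simps)
  moreover have "\<alpha> * \<beta> - 4 * \<alpha> * \<gamma> + 4 * \<gamma>^2 = b * \<alpha> + 4 * E^2"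
    unfolding b_def E_def by (simp add: power2_eq_square algebra_simps)
  ultimately show ?thesis unfolding b_def by simp
qed

lemma zero_int_zero:
  fixes d :: "real \<Rightarrow> real"
  assumes "continuous_on {0..1} d" "\<And>y. y \<in> {0..1} \<Longrightarrow> 0 \<le> d y" "(d has_integral 0) {0..1}" "x \<in> {0..1}"
  shows "d x = 0"
proof -
  have c: "cbox (0::real) 1 = {0..1}" by (rule cbox_interval)
  have bx: "box (0::real) 1 = {0<..<1}" by (rule box_real)
  show ?thesis
    by (rule has_integral_0_cbox_imp_0[of 0 1 d]) (use assms in \<open>auto simp: c bx\<close>)
qed

lemma eq_alpha: "\<alpha> = 2 * \<gamma> \<Longrightarrow> 2 * \<gamma> = \<beta>"
proof -
  assume a: "\<alpha> = 2 * \<gamma>"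
  define d where "d y = ((-\<alpha>) + \<alpha> * y + 0 * y^2) + 1 * \<phi> y" for y
  have "(d has_integral (((-\<alpha>) * (1 - 0) + \<alpha> * (1^2 - 0^2) / 2 + 0 * (1^3 - 0^3) / 3) + 1 * \<gamma>)) {0..1}"
    unfolding d_def by (rule int_lin_phi)
  then have i: "(d has_integral 0) {0..1}" using a by simp
  have c: "continuous_on {0..1} d" unfolding d_def by (intro continuous_intros phi_cont)
  have "d 0 = 0" by (rule zero_int_zero[OF c _ i]) (use phi_lower in \<open>auto simp: d_def algebra_simps\<close>)
  then show ?thesis using a phi_0 by (simp add: d_def)
qed

lemma eq_beta: "2 * \<gamma> = \<beta> \<Longrightarrow> J = \<gamma> / 3"
proof -
  assume a: "2 * \<gamma> = \<beta>"
  define d where "d y = (\<beta> + (- \<beta>) * y + 0 * y^2) + (-1) * \<phi> y" for y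
  have "(d has_integral ((\<beta> * (1 - 0) + (- \<beta>) * (1^2 - 0^2) / 2 + 0 * (1^3 - 0^3) / 3) + (-1) * \<gamma>)) {0..1}"
    unfolding d_def by (rule int_lin_phi)
  then have i: "(d has_integral 0) {0..1}" by (simp add: a[symmetric])
  have c: "continuous_on {0..1} d" unfolding d_def by (intro continuous_intros phi_cont)
  have z: "d y = 0" if "y \<in> {0..1}" for y
    by (rule zero_int_zero[OF c _ i that]) (use phi_upper in \<open>auto simp: d_def algebra_simps\<close>)
  have "((\<lambda>y. 0 + \<beta> * y + (-\<beta>) * y^2) has_integral (0 * (1 - 0) + \<beta> * (1^2 - 0^2) / 2 + (-\<beta>) * (1^3 - 0^3) / 3)) {0..1}"
    by (rule quad_int) simp
  then have "((\<lambda>y. y * \<phi> y) has_integral (\<beta> / 6)) {0..1}"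
  proof (subst has_integral_cong[of _ _ "\<lambda>y. 0 + \<beta> * y + (-\<beta>) * y^2"])
    fix y :: real assume "y \<in> {0..1}"
    then have "\<phi> y = \<beta> + (- \<beta>) * y" using z[of y] by (simp add: d_def)
    then show "y * \<phi> y = 0 + \<beta> * y + (-\<beta>) * y^2" by (simp only:) (simp add: algebra_simps power2_eq_square)
  qed simp
  then have "\<beta> / 6 = J" using J_int by (rule has_integral_unique)
  then show ?thesis using a by simp
qed

lemma int_Tg_val: "integral {0..1} (T g) = J / \<gamma>" using int_Tg by (rule integral_unique)

lemma h_props:
  "(\<forall>x\<in>{0..1}. (T g has_real_derivative h x) (at x within {0..1}))
              \<and> (\<forall>x\<in>{0..1}. h x \<le> 0)
              \<and> continuous_on {0..1} h \<and> strict_mono_on {0..1} h \<and> concave_on {0..1} h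
              \<and> (\<forall>x\<in>{0..1}. \<beta> / \<gamma> * (x - 1) \<le> h x \<and> h x \<le> \<alpha> / \<gamma> * (x - 1))"
proof (intro conjI ballI)
  fix x :: real assume x: "x \<in> {0..1}"
  show "(T g has_real_derivative h x) (at x within {0..1})" by (rule Tg_deriv[OF x])
  show "h x \<le> 0" unfolding h_def using phi_nonneg[OF x] gamma_pos by simp
  show "\<beta> / \<gamma> * (x - 1) \<le> h x" unfolding h_def using phi_upper[OF x] gamma_pos mult_left_mono[of "\<phi> x + x * \<beta>" \<beta> \<gamma>] by (simp add: field_simps)
  show "h x \<le> \<alpha> / \<gamma> * (x - 1)" unfolding h_def using phi_lower[OF x] gamma_pos mult_left_mono[of \<alpha> "\<phi> x + x * \<alpha>" \<gamma>] by (simp add: field_simps)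
next
  show "continuous_on {0..1} h" unfolding h_def using gamma_pos
    by (intro continuous_intros phi_cont) auto
  show "strict_mono_on {0..1} h"
  proof (rule strict_mono_onI)
    fix r s :: real assume "r \<in> {0..1}" "s \<in> {0..1}" "r < s"
    then have "\<phi> s < \<phi> r" by (rule phi_strict)
    then have "\<phi> s / \<gamma> < \<phi> r / \<gamma>" using gamma_pos by (simp add: divide_strict_right_mono)
    then show "h r < h s" unfolding h_def by simp
  qed
  show "concave_on {0..1} h" unfolding concave_on_def
  proof (rule convex_onI)
    fix t x y :: real assume t: "0 < t" "t < 1" and x: "x \<in> {0..1}" and y: "y \<in> {0..1}"
    have "\<phi> ((1 - t) *\<^sub>R x + t *\<^sub>R y) \<le> (1 - t) * \<phi> x + t * \<phi> y"
      using convex_onD[OF phi_convex, of t x y] t x y by simp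
    then have "\<phi> ((1 - t) *\<^sub>R x + t *\<^sub>R y) / \<gamma> \<le> ((1 - t) * \<phi> x + t * \<phi> y) / \<gamma>"
      using gamma_pos by (simp add: divide_right_mono)
    then show "- h ((1 - t) *\<^sub>R x + t *\<^sub>R y) \<le> (1 - t) * - h x + t * - h y"
      unfolding h_def by (simp add: add_divide_distrib)
  qed auto
qed

lemma TgC: "classC (T g)"
  unfolding classC_def classE_def decreasing01_def
proof (intro conjI ballI impI)
  show "T g \<in> borel_measurable (lebesgue_on {0..1})"
    by (rule continuous_imp_measurable_on_sets_lebesgue[OF Tg_cont]) auto
  show "continuous_on {0..1} (T g)" by (rule Tg_cont)
  show "T g 0 = 1" by (rule Tg_0)
  show "T g 1 = 0" by (rule Tg_1)
  show "0 < integral {0..1} (T g)" unfolding int_Tg_val using J_ge apos gamma_pos by auto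
  fix x y :: real assume x: "x \<in> {0..1}" and y: "y \<in> {0..1}"
  assume "x \<le> y" then show "T g y \<le> T g x" using Tg_strict[OF x y] by (cases "x = y") auto
next
  fix x :: real assume x: "x \<in> {0..1}"
  then show "0 \<le> T g x" by (rule Tg_nonneg)
qed

lemma TgD: "classDsharpconv (T g)"
  unfolding classDsharpconv_def classDsharp_def classD_def classCconv_def
proof (intro conjI ballI impI TgC Tg_convex)
  fix x y :: real assume x: "x \<in> {0..1}" and y: "y \<in> {0..1}"
  assume "x < y" then show "T g y < T g x" using Tg_strict x y by auto
next
  show "\<exists>f'. (\<forall>x\<in>{0<..1}. (T g has_real_derivative f' x) (at x within {0..1}))
      \<and> continuous_on {0<..1} f' \<and> f' 1 = 0 \<and> (\<exists>L\<le>0. (f' \<longlongrightarrow> L) (at_right 0))"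
  proof (intro exI conjI)
    show "\<forall>x\<in>{0<..1}. (T g has_real_derivative h x) (at x within {0..1})" using h_props by auto
    show "continuous_on {0<..1} h" using h_props by (auto intro: continuous_on_subset)
    show "h 1 = 0" unfolding h_def using phi_1 by simp
    have "continuous_on {0..1} h" using h_props by auto
    then have "(h \<longlongrightarrow> h 0) (at 0 within {0..1})" by (auto simp: continuous_on_def)
    then show "(h \<longlongrightarrow> h 0) (at_right 0)" using at_within_Icc_at_right[of "0::real" 1] by simp
    show "h 0 \<le> 0" using h_props by auto
  qed
qed

lemma final:
  "(\<alpha> \<le> 2 * \<gamma> \<and> 2 * \<gamma> \<le> \<beta> \<and> \<beta> \<le> 1
          \<and> (\<alpha> = 2 * \<gamma> \<longrightarrow> 2 * \<gamma> = \<beta>)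
          \<and> (2 * \<gamma> = \<beta> \<longrightarrow> integral {0..1} (T g) = 1/3))
       \<and> (\<exists>h. (\<forall>x\<in>{0..1}. (T g has_real_derivative h x) (at x within {0..1}))
              \<and> (\<forall>x\<in>{0..1}. h x \<le> 0)
              \<and> continuous_on {0..1} h \<and> strict_mono_on {0..1} h \<and> concave_on {0..1} h
              \<and> (\<forall>x\<in>{0..1}. \<beta> / \<gamma> * (x - 1) \<le> h x \<and> h x \<le> \<alpha> / \<gamma> * (x - 1)))
       \<and> (classDsharpconv (T g) \<and> stride (T g) = \<gamma> / \<beta>)
       \<and> integral {0..1} (T g) \<le> 1/3
       \<and> \<alpha> * \<beta> - 4 * \<alpha> * \<gamma> + 4 * \<gamma>^2 \<le> 6 * (\<beta> - \<alpha>) * \<gamma> * integral {0..1} (T g)"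
proof (intro conjI impI)
  show "\<alpha> \<le> 2 * \<gamma>" using gamma_ge by simp
  show "2 * \<gamma> \<le> \<beta>" using gamma_le by simp
  show "\<beta> \<le> 1" by (rule b1)
  show "\<alpha> = 2 * \<gamma> \<Longrightarrow> 2 * \<gamma> = \<beta>" by (rule eq_alpha)
  show "2 * \<gamma> = \<beta> \<Longrightarrow> integral {0..1} (T g) = 1/3"
    using eq_beta gamma_pos unfolding int_Tg_val by simp
  show "\<exists>h. (\<forall>x\<in>{0..1}. (T g has_real_derivative h x) (at x within {0..1}))
              \<and> (\<forall>x\<in>{0..1}. h x \<le> 0)
              \<and> continuous_on {0..1} h \<and> strict_mono_on {0..1} h \<and> concave_on {0..1} h
              \<and> (\<forall>x\<in>{0..1}. \<beta> / \<gamma> * (x - 1) \<le> h x \<and> h x \<le> \<alpha> / \<gamma> * (x - 1))"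
    using h_props by blast
  show "classDsharpconv (T g)" by (rule TgD)
  show "stride (T g) = \<gamma> / \<beta>" by (rule stride_Tg)
  show "integral {0..1} (T g) \<le> 1/3" unfolding int_Tg_val using J_le gamma_pos by (simp add: field_simps)
  show "\<alpha> * \<beta> - 4 * \<alpha> * \<gamma> + 4 * \<gamma>^2 \<le> 6 * (\<beta> - \<alpha>) * \<gamma> * integral {0..1} (T g)"
    unfolding int_Tg_val using f_ineq gamma_pos by simp
qed

end


lemma stride_cond:
  fixes g :: "real \<Rightarrow> real"
  assumes "0 < \<alpha>" "\<alpha> \<le> stride g" "g 1 = 0"
  shows "\<forall>x\<in>{0..1}. \<alpha> - x \<le> \<alpha> * g x"
proof (rule ballI, rule ccontr)
  fix x :: real assume x: "x \<in> {0..1}" and nx: "\<not> \<alpha> - x \<le> \<alpha> * g x"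
  let ?S = "{a. 0 \<le> a \<and> (\<forall>x\<in>{0..1}. a - x \<le> a * g x)}"
  define q where "q = 1 - g x"
  have aq: "x < \<alpha> * q" using nx unfolding q_def by (simp add: algebra_simps)
  have qpos: "0 < q"
  proof (rule ccontr)
    assume "\<not> 0 < q"
    then have "\<alpha> * q \<le> 0" using assms(1) mult_nonneg_nonpos[of \<alpha> q] by simp
    then show False using aq x by simp
  qed
  have "0 \<in> ?S" by auto
  then have ne: "?S \<noteq> {}" by blast
  have "Sup ?S \<le> x / q"
  proof (rule cSup_least[OF ne])
    fix a assume "a \<in> ?S"
    then have "a - x \<le> a * g x" using x by auto
    then have "a * q \<le> x" unfolding q_def by (simp add: algebra_simps)
    then show "a \<le> x / q" using qpos by (simp add: field_simps)
  qed
  then have "\<alpha> \<le> x / q" using assms(2) unfolding stride_def by simp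
  then have "\<alpha> * q \<le> x" using qpos by (simp add: field_simps)
  then show False using aq by simp
qed

theorem lemma2p4:
  fixes g :: "real \<Rightarrow> real" and \<alpha> \<beta> \<gamma> :: real
  assumes hg: "classCconv g"
    and h\<alpha>: "0 < \<alpha>" "\<alpha> \<le> stride g"
    and h\<beta>: "\<beta> = Inf {x\<in>{0..1}. g x = 0}"
    and h\<gamma>: "\<gamma> = integral {0..1} g"
  shows "(\<alpha> \<le> 2 * \<gamma> \<and> 2 * \<gamma> \<le> \<beta> \<and> \<beta> \<le> 1
          \<and> (\<alpha> = 2 * \<gamma> \<longrightarrow> 2 * \<gamma> = \<beta>)
          \<and> (2 * \<gamma> = \<beta> \<longrightarrow> integral {0..1} (T g) = 1/3))
       \<and> (\<exists>h. (\<forall>x\<in>{0..1}. (T g has_real_derivative h x) (at x within {0..1}))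
              \<and> (\<forall>x\<in>{0..1}. h x \<le> 0)
              \<and> continuous_on {0..1} h \<and> strict_mono_on {0..1} h \<and> concave_on {0..1} h
              \<and> (\<forall>x\<in>{0..1}. \<beta> / \<gamma> * (x - 1) \<le> h x \<and> h x \<le> \<alpha> / \<gamma> * (x - 1)))
       \<and> (classDsharpconv (T g) \<and> stride (T g) = \<gamma> / \<beta>)
       \<and> integral {0..1} (T g) \<le> 1/3
       \<and> \<alpha> * \<beta> - 4 * \<alpha> * \<gamma> + 4 * \<gamma>^2 \<le> 6 * (\<beta> - \<alpha>) * \<gamma> * integral {0..1} (T g)"
proof -
  have cC: "continuous_on {0..1} g" and g0: "g 0 = 1" and g1: "g 1 = 0"
    and cv: "convex_on {0..1} g" and nn: "\<And>x. x \<in> {0..1} \<Longrightarrow> 0 \<le> g x"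
    and dc: "\<And>x y. x \<in> {0..1} \<Longrightarrow> y \<in> {0..1} \<Longrightarrow> x \<le> y \<Longrightarrow> g y \<le> g x"
    using hg unfolding classCconv_def classC_def classE_def decreasing01_def by auto
  have al: "\<And>x. x \<in> {0..1} \<Longrightarrow> \<alpha> - x \<le> \<alpha> * g x"
    using stride_cond[OF h\<alpha> g1] by auto
  have loc: "gsetup g \<alpha>"
    by (unfold_locales) (use cC g0 g1 cv nn dc h\<alpha>(1) al in auto)
  have eb: "\<beta> = gsetup.\<beta> g" using gsetup.\<beta>_def[OF loc] h\<beta> by simp
  have eg: "\<gamma> = gsetup.\<gamma> g" using gsetup.\<gamma>_def[OF loc] h\<gamma> by simp
  show ?thesis unfolding eb eg by (rule gsetup.final[OF loc])
qed

end
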